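(* If $G$ is a graph with minimum degree $\delta(G)\ge 2$ and $\beta_0(G)=\Gamma(G)$, then $\beta_0(G)=\Gamma(G)=\Gamma_{\rm cer}(G)$.
   Context: All graphs are finite and simple; $\delta(G)$ is the minimum degree and $\beta_0(G)$ is the maximum cardinality of an independent set of vertices of $G$. A set $D\subseteq V_G$ is a dominating set of $G$ if every vertex of $V_G-D$ has a neighbor in $D$; $\Gamma(G)$ is the maximum cardinality of a minimal (with respect to inclusion) dominating set. A set $D$ is a certified dominating set of $G$ if $D$ is dominating and every vertex of $D$ has either zero or at least two neighbors in $V_G-D$; $\Gamma_{\rm cer}(G)$ is the maximum cardinality of a minimal (with respect to inclusion) certified dominating set. *)

theory Defs
  imports Main
begin

definition simple_graph :: "'a set \<Rightarrow> ('a \<Rightarrow> 'a \<Rightarrow> bool) \<Rightarrow> bool" where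
  "simple_graph V E \<longleftrightarrow> finite V \<and> (\<forall>u v. E u v \<longrightarrow> E v u)
     \<and> (\<forall>v. \<not> E v v) \<and> (\<forall>u v. E u v \<longrightarrow> u \<in> V \<and> v \<in> V)"

definition nbhd :: "'a set \<Rightarrow> ('a \<Rightarrow> 'a \<Rightarrow> bool) \<Rightarrow> 'a \<Rightarrow> 'a set" where
  "nbhd V E v = {u \<in> V. E v u}"

definition degree :: "'a set \<Rightarrow> ('a \<Rightarrow> 'a \<Rightarrow> bool) \<Rightarrow> 'a \<Rightarrow> nat" where
  "degree V E v = card (nbhd V E v)"

definition min_degree :: "'a set \<Rightarrow> ('a \<Rightarrow> 'a \<Rightarrow> bool) \<Rightarrow> nat" where
  "min_degree V E = Min (degree V E ` V)"

definition independent :: "'a set \<Rightarrow> ('a \<Rightarrow> 'a \<Rightarrow> bool) \<Rightarrow> 'a set \<Rightarrow> bool" where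
  "independent V E S \<longleftrightarrow> S \<subseteq> V \<and> (\<forall>u\<in>S. \<forall>v\<in>S. \<not> E u v)"

definition indep_number :: "'a set \<Rightarrow> ('a \<Rightarrow> 'a \<Rightarrow> bool) \<Rightarrow> nat" where
  "indep_number V E = Max (card ` {S. independent V E S})"

definition dominating :: "'a set \<Rightarrow> ('a \<Rightarrow> 'a \<Rightarrow> bool) \<Rightarrow> 'a set \<Rightarrow> bool" where
  "dominating V E D \<longleftrightarrow> D \<subseteq> V \<and> (\<forall>v \<in> V - D. \<exists>u\<in>D. E v u)"

definition minimal_dominating :: "'a set \<Rightarrow> ('a \<Rightarrow> 'a \<Rightarrow> bool) \<Rightarrow> 'a set \<Rightarrow> bool" where
  "minimal_dominating V E D \<longleftrightarrow> dominating V E D \<and> (\<forall>D'. D' \<subset> D \<longrightarrow> \<not> dominating V E D')"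

definition upper_domination :: "'a set \<Rightarrow> ('a \<Rightarrow> 'a \<Rightarrow> bool) \<Rightarrow> nat" where
  "upper_domination V E = Max (card ` {D. minimal_dominating V E D})"

definition certified_dominating :: "'a set \<Rightarrow> ('a \<Rightarrow> 'a \<Rightarrow> bool) \<Rightarrow> 'a set \<Rightarrow> bool" where
  "certified_dominating V E D \<longleftrightarrow> dominating V E D \<and>
     (\<forall>v\<in>D. card (nbhd V E v \<inter> (V - D)) = 0 \<or> card (nbhd V E v \<inter> (V - D)) \<ge> 2)"

definition minimal_certified_dominating :: "'a set \<Rightarrow> ('a \<Rightarrow> 'a \<Rightarrow> bool) \<Rightarrow> 'a set \<Rightarrow> bool" where
  "minimal_certified_dominating V E D \<longleftrightarrow> certified_dominating V E D \<and>
     (\<forall>D'. D' \<subset> D \<longrightarrow> \<not> certified_dominating V E D')"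

definition upper_certified_domination :: "'a set \<Rightarrow> ('a \<Rightarrow> 'a \<Rightarrow> bool) \<Rightarrow> nat" where
  "upper_certified_domination V E = Max (card ` {D. minimal_certified_dominating V E D})"

end

theory Submission
  imports Defs
begin

lemma maxind_exists:
  assumes "finite U" "\<forall>x. \<not> E x x"
  shows "\<exists>I. I \<subseteq> U \<and> (\<forall>a\<in>I. \<forall>b\<in>I. \<not> E a b) \<and>
           (\<forall>u\<in>U - I. \<exists>i\<in>I. E u i \<or> E i u)"
proof -
  let ?F = "{I. I \<subseteq> U \<and> (\<forall>a\<in>I. \<forall>b\<in>I. \<not> E a b)}"
  have ne: "{} \<in> ?F" by simp
  have finF: "finite ?F" by (rule finite_subset[of _ "Pow U"]) (use assms(1) in auto)
  have neF: "card ` ?F \<noteq> {}" using ne by blast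
  obtain I where I: "I \<in> ?F" and cI: "card I = Max (card ` ?F)"
    using Max_in[OF finite_imageI[OF finF] neF] by auto
  have mx: "card I \<ge> card J" if "J \<in> ?F" for J
    using Max_ge[OF finite_imageI[OF finF]] that cI by auto
  have "\<forall>u\<in>U - I. \<exists>i\<in>I. E u i \<or> E i u"
  proof (rule ccontr)
    assume "\<not> ?thesis"
    then obtain u where u: "u \<in> U - I" "\<forall>i\<in>I. \<not> E u i \<and> \<not> E i u" by blast
    have "insert u I \<in> ?F" using I u assms(2) by auto
    hence "card (insert u I) \<le> card I" using mx by blast
    moreover have "finite I" using I assms finite_subset by blast
    ultimately show False using u by simp
  qed
  thus ?thesis using I by blast
qed

lemma dom_mono:
  assumes "dominating V E A" "A \<subseteq> B" "B \<subseteq> V"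
  shows "dominating V E B"
  using assms unfolding dominating_def by blast

lemma mincert_imp_mindom:
  assumes g: "simple_graph V E"
    and deg: "\<forall>x\<in>V. card (nbhd V E x) \<ge> 2"
    and D: "minimal_certified_dominating V E D"
  shows "minimal_dominating V E D"
proof (rule ccontr)
  assume nm: "\<not> minimal_dominating V E D"
  have cD: "certified_dominating V E D" using D minimal_certified_dominating_def by blast
  hence dD: "dominating V E D" and DV: "D \<subseteq> V"
    and cert: "\<forall>v\<in>D. card (nbhd V E v \<inter> (V - D)) = 0 \<or> card (nbhd V E v \<inter> (V - D)) \<ge> 2"
    unfolding certified_dominating_def dominating_def by auto
  have finV: "finite V" and sym: "\<forall>u v. E u v \<longrightarrow> E v u" and irr: "\<forall>v. \<not> E v v"
    and inV: "\<forall>u v. E u v \<longrightarrow> u \<in> V \<and> v \<in> V"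
    using g unfolding simple_graph_def by auto
  obtain D' where D': "D' \<subset> D" "dominating V E D'" using nm dD unfolding minimal_dominating_def by auto
  then obtain v where v: "v \<in> D" "v \<notin> D'" by blast
  have dv: "dominating V E (D - {v})"
    using D'(2) v DV dom_mono[of V E D' "D - {v}"] D'(1) by blast
  have vnb: "\<exists>w\<in>D - {v}. E v w" using dv v DV unfolding dominating_def by blast
  define D2 where "D2 = {y\<in>D. card (nbhd V E y \<inter> (V - D)) \<ge> 2}"
  define R where "R = D2 - {v}"
  define U where "U = {x\<in>D - R. \<forall>y\<in>R. \<not> E x y}"
  have "U \<subseteq> V" using DV U_def by auto
  hence finU: "finite U" using finV finite_subset by blast
  obtain I where I: "I \<subseteq> U" "\<forall>a\<in>I. \<forall>b\<in>I. \<not> E a b" "\<forall>u\<in>U - I. \<exists>i\<in>I. E u i \<or> E i u"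
    using maxind_exists[of U E, OF finU irr] by blast
  define T where "T = R \<union> I"
  have TD: "T \<subseteq> D" using I U_def R_def D2_def T_def by auto
  have outside: "\<exists>y\<in>R. E x y" if "x \<in> V - D" for x
  proof -
    have "x \<in> V - (D - {v})" using that by blast
    then obtain y where y: "y \<in> D - {v}" "E x y" using dv unfolding dominating_def by meson
    have "E y x" using y(2) sym by blast
    hence "x \<in> nbhd V E y \<inter> (V - D)" using that unfolding nbhd_def by blast
    moreover have "finite (nbhd V E y \<inter> (V - D))" using finV unfolding nbhd_def by auto
    ultimately have "card (nbhd V E y \<inter> (V - D)) \<noteq> 0" by (metis card_0_eq empty_iff)
    moreover have "y \<in> D" using y by blast
    ultimately have "2 \<le> card (nbhd V E y \<inter> (V - D))" using cert[rule_format, of y] by linarith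
    hence "y \<in> D2" using \<open>y \<in> D\<close> unfolding D2_def by blast
    thus ?thesis using y unfolding R_def by blast
  qed
  have domT: "dominating V E T"
    unfolding dominating_def
  proof (intro conjI ballI)
    show "T \<subseteq> V" using TD DV by auto
  next
    fix x assume x: "x \<in> V - T"
    show "\<exists>u\<in>T. E x u"
    proof (cases "x \<in> D")
      case False
      thus ?thesis using outside x T_def by auto
    next
      case True
      show ?thesis
      proof (cases "x \<in> U")
        case True
        have "x \<in> U - I" using True x unfolding T_def by blast
        then obtain i where "i \<in> I" "E x i \<or> E i x" using I(3) by blast
        thus ?thesis using sym unfolding T_def by blast
      next
        case False
        hence "\<exists>y\<in>R. E x y" using \<open>x \<in> D\<close> x unfolding U_def T_def by blast
        thus ?thesis unfolding T_def by blast
      qed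
    qed
  qed
  have certT: "certified_dominating V E T"
    unfolding certified_dominating_def
  proof (intro conjI ballI domT)
    fix y assume y: "y \<in> T"
    have fin: "finite (nbhd V E y \<inter> (V - T))" using finV unfolding nbhd_def by auto
    show "card (nbhd V E y \<inter> (V - T)) = 0 \<or> 2 \<le> card (nbhd V E y \<inter> (V - T))"
    proof (cases "y \<in> R")
      case True
      have "nbhd V E y \<inter> (V - D) \<subseteq> nbhd V E y \<inter> (V - T)" using TD by auto
      hence "card (nbhd V E y \<inter> (V - D)) \<le> card (nbhd V E y \<inter> (V - T))"
        using fin card_mono by blast
      thus ?thesis using True R_def D2_def by auto
    next
      case False
      hence yI: "y \<in> I" using y T_def by auto
      have "nbhd V E y \<inter> (V - T) = nbhd V E y"
        using yI I U_def T_def unfolding nbhd_def by blast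
      moreover have "y \<in> V" using yI I U_def DV by auto
      ultimately show ?thesis using deg by auto
    qed
  qed
  have "T \<noteq> D"
  proof
    assume TeqD: "T = D"
    hence "v \<in> T" using v by auto
    have "v \<notin> R" using R_def by auto
    hence vI: "v \<in> I" using \<open>v \<in> T\<close> T_def by auto
    hence vU: "v \<in> U" using I by auto
    obtain w where w: "w \<in> D - {v}" "E v w" using vnb by blast
    have "w \<notin> R" using vU w U_def by auto
    moreover have "w \<in> T" using TeqD w by auto
    ultimately have "w \<in> I" using T_def by auto
    thus False using vI w I by auto
  qed
  hence "T \<subset> D" using TD by auto
  moreover have "\<forall>D'. D' \<subset> D \<longrightarrow> \<not> certified_dominating V E D'"
    using D unfolding minimal_certified_dominating_def by blast
  ultimately show False using certT by blast
qed

theorem corollary3p6: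
  fixes V :: "'a set" and E :: "'a \<Rightarrow> 'a \<Rightarrow> bool"
  assumes "simple_graph V E"
    and "V \<noteq> {}"
    and "min_degree V E \<ge> 2"
    and "indep_number V E = upper_domination V E"
  shows "indep_number V E = upper_domination V E
       \<and> upper_domination V E = upper_certified_domination V E"
proof -
  have finV: "finite V" and sym: "\<forall>u v. E u v \<longrightarrow> E v u" and irr: "\<forall>v. \<not> E v v"
    using assms(1) unfolding simple_graph_def by auto
  have deg: "\<forall>x\<in>V. card (nbhd V E x) \<ge> 2"
  proof
    fix x assume "x \<in> V"
    hence "Min (degree V E ` V) \<le> degree V E x" using finV by simp
    thus "card (nbhd V E x) \<ge> 2" using assms(3) unfolding min_degree_def degree_def by linarith
  qed
  have finI: "finite {S. independent V E S}"
    by (rule finite_subset[of _ "Pow V"]) (use finV in \<open>auto simp: independent_def\<close>)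
  have "{} \<in> {S. independent V E S}" by (simp add: independent_def)
  hence neI: "card ` {S. independent V E S} \<noteq> {}" by blast
  obtain I where I: "independent V E I" "card I = indep_number V E"
    using Max_in[OF finite_imageI[OF finI] neI] unfolding indep_number_def by auto
  have IV: "I \<subseteq> V" and Iind: "\<forall>u\<in>I. \<forall>v\<in>I. \<not> E u v" using I(1) unfolding independent_def by auto
  have finIs: "finite I" using IV finV finite_subset by blast
  have Imax: "\<exists>u\<in>I. E x u" if x: "x \<in> V - I" for x
  proof (rule ccontr)
    assume nx: "\<not> (\<exists>u\<in>I. E x u)"
    have "independent V E (insert x I)"
      unfolding independent_def using IV x nx Iind irr sym by blast
    hence "card (insert x I) \<le> indep_number V E"
      unfolding indep_number_def using Max_ge[OF finite_imageI[OF finI]] by blast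
    thus False using I(2) finIs x by simp
  qed
  have Idom: "dominating V E I" unfolding dominating_def using IV Imax by blast
  have Icert: "certified_dominating V E I"
    unfolding certified_dominating_def
  proof (intro conjI ballI Idom)
    fix y assume y: "y \<in> I"
    have "nbhd V E y \<inter> (V - I) = nbhd V E y" using y Iind unfolding nbhd_def by blast
    thus "card (nbhd V E y \<inter> (V - I)) = 0 \<or> 2 \<le> card (nbhd V E y \<inter> (V - I))"
      using deg y IV by auto
  qed
  have Imin: "minimal_certified_dominating V E I"
    unfolding minimal_certified_dominating_def
  proof (intro conjI allI impI Icert notI)
    fix D' assume D': "D' \<subset> I" "certified_dominating V E D'"
    then obtain x where x: "x \<in> I" "x \<notin> D'" by blast
    have "dominating V E D'" using D'(2) certified_dominating_def by blast
    then obtain u where "u \<in> D'" "E x u" using x IV unfolding dominating_def by blast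
    thus False using D'(1) x Iind by blast
  qed
  have finC: "finite (card ` {D. minimal_certified_dominating V E D})"
    by (rule finite_imageI, rule finite_subset[of _ "Pow V"])
       (use finV in \<open>auto simp: minimal_certified_dominating_def certified_dominating_def dominating_def\<close>)
  have finDm: "finite (card ` {D. minimal_dominating V E D})"
    by (rule finite_imageI, rule finite_subset[of _ "Pow V"])
       (use finV in \<open>auto simp: minimal_dominating_def dominating_def\<close>)
  have ge: "upper_domination V E \<le> upper_certified_domination V E"
  proof -
    have "card I \<le> upper_certified_domination V E"
      unfolding upper_certified_domination_def using Max_ge[OF finC] Imin by blast
    thus ?thesis using I(2) assms(4) by simp
  qed
  have neC: "card ` {D. minimal_certified_dominating V E D} \<noteq> {}" using Imin by blast
  obtain D where D: "minimal_certified_dominating V E D" "card D = upper_certified_domination V E"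
    using Max_in[OF finC neC] unfolding upper_certified_domination_def by auto
  have "minimal_dominating V E D" using mincert_imp_mindom[OF assms(1) deg D(1)] .
  hence "card D \<le> upper_domination V E"
    unfolding upper_domination_def using Max_ge[OF finDm] by blast
  thus ?thesis using ge D(2) assms(4) by simp
qed

end
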